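(* For all partitions $\xi,\xi'\in P_I$: $\mathcal D_{\xi\text{-unc}}\cap\mathcal D_{\xi'\text{-unc}}=\mathcal D_{(\xi\wedge\xi')\text{-unc}}$, where $\xi\wedge\xi'$ is the meet (greatest common refinement) of $\xi$ and $\xi'$ in $(P_I,\preceq)$.
   Context: Let $n\ge1$, $L=\{1,\dots,n\}$, and for $i\in L$ let $\mathcal H_i$ be a Hilbert space with $1<\dim\mathcal H_i<\infty$; $\mathcal H_X=\bigotimes_{i\in X}\mathcal H_i$ and $\mathcal D_X$ is the set of density operators on $\mathcal H_X$. $P_I$ is the set of partitions of $L$ ordered by refinement ($\upsilon\preceq\xi$ iff every part of $\upsilon$ lies in a part of $\xi$); it is a lattice, and $\xi\wedge\xi'=\{X\cap X':X\in\xi,X'\in\xi',X\cap X'\neq\emptyset\}$. For $\xi\in P_I$, $\mathcal D_{\xi\text{-unc}}=\{\varrho\in\mathcal D_L:\varrho=\bigotimes_{X\in\xi}\varrho_X,\ \varrho_X\in\mathcal D_X\}$. *)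

theory Defs
  imports "HOL-Analysis.Analysis" "HOL-Library.Disjoint_Sets"
begin

text \<open>Site i (i in {1..n}) carries the Hilbert space C^(d i) with
 orthonormal basis indexed by {0..<d i}. For X a set of sites, the tensor product
 H_X has the product basis, indexed by configurations a :: nat => nat with
 a i < d i for i in X and a i = 0 outside X. Operators on H_X are matrices
 indexed by configurations (values outside the configuration set are required to be 0).\<close>

type_synonym config = "nat \<Rightarrow> nat"
type_synonym operator = "config \<Rightarrow> config \<Rightarrow> complex"

definition configs :: "(nat \<Rightarrow> nat) \<Rightarrow> nat set \<Rightarrow> config set" where
  "configs d X = {a. (\<forall>i\<in>X. a i < d i) \<and> (\<forall>i. i \<notin> X \<longrightarrow> a i = 0)}"

definition restr :: "nat set \<Rightarrow> config \<Rightarrow> config" where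
  "restr X a = (\<lambda>i. if i \<in> X then a i else 0)"

definition density :: "(nat \<Rightarrow> nat) \<Rightarrow> nat set \<Rightarrow> operator \<Rightarrow> bool" where
  "density d X \<rho> \<longleftrightarrow>
     (\<forall>a b. (a \<notin> configs d X \<or> b \<notin> configs d X) \<longrightarrow> \<rho> a b = 0) \<and>
     (\<forall>v :: config \<Rightarrow> complex.
        let q = (\<Sum>a\<in>configs d X. \<Sum>b\<in>configs d X. cnj (v a) * \<rho> a b * v b)
        in Im q = 0 \<and> Re q \<ge> 0) \<and>
     (\<Sum>a\<in>configs d X. \<rho> a a) = 1"

definition D :: "(nat \<Rightarrow> nat) \<Rightarrow> nat set \<Rightarrow> operator set" where
  "D d X = {\<rho>. density d X \<rho>}"

definition tensor :: "(nat \<Rightarrow> nat) \<Rightarrow> nat set \<Rightarrow> nat set set \<Rightarrow> (nat set \<Rightarrow> operator) \<Rightarrow> operator" where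
  "tensor d L \<xi> \<rho>s = (\<lambda>a b. if a \<in> configs d L \<and> b \<in> configs d L
      then (\<Prod>X\<in>\<xi>. \<rho>s X (restr X a) (restr X b)) else 0)"

definition D_unc :: "(nat \<Rightarrow> nat) \<Rightarrow> nat set \<Rightarrow> nat set set \<Rightarrow> operator set" where
  "D_unc d L \<xi> = {\<rho>. \<rho> \<in> D d L \<and>
      (\<exists>\<rho>s. (\<forall>X\<in>\<xi>. \<rho>s X \<in> D d X) \<and> \<rho> = tensor d L \<xi> \<rho>s)}"

definition pmeet :: "'a set set \<Rightarrow> 'a set set \<Rightarrow> 'a set set" where
  "pmeet \<xi> \<xi>' = {X \<inter> X' | X X'. X \<in> \<xi> \<and> X' \<in> \<xi>' \<and> X \<inter> X' \<noteq> {}}"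

end

theory Submission
  imports Defs
begin

definition addc :: "config \<Rightarrow> config \<Rightarrow> config" where
  "addc a c = (\<lambda>i. a i + c i)"

definition ptrace :: "(nat \<Rightarrow> nat) \<Rightarrow> nat set \<Rightarrow> nat set \<Rightarrow> operator \<Rightarrow> operator" where
  "ptrace d L Y \<rho> = (\<lambda>a b. if a \<in> configs d Y \<and> b \<in> configs d Y
     then (\<Sum>c\<in>configs d (L - Y). \<rho> (addc a c) (addc b c)) else 0)"

lemma configs_zero: "a \<in> configs d X \<Longrightarrow> i \<notin> X \<Longrightarrow> a i = 0"
  by (simp add: configs_def)

lemma configs_lt: "a \<in> configs d X \<Longrightarrow> i \<in> X \<Longrightarrow> a i < d i"
  by (simp add: configs_def)

lemma restr_configs: "a \<in> configs d L \<Longrightarrow> X \<subseteq> L \<Longrightarrow> restr X a \<in> configs d X"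
  by (auto simp: configs_def restr_def)

lemma restr_id: "a \<in> configs d X \<Longrightarrow> restr X a = a"
  by (auto simp: configs_def restr_def)

lemma restr_restr: "restr Z (restr X a) = restr (Z \<inter> X) a"
  by (auto simp: restr_def)

lemma restr_zero: "a \<in> configs d Y \<Longrightarrow> Z \<inter> Y = {} \<Longrightarrow> restr Z a = (\<lambda>_. 0)"
  by (auto simp: configs_def restr_def fun_eq_iff)

lemma restr_sub: "a \<in> configs d Y \<Longrightarrow> restr Z a = restr (Z \<inter> Y) a"
  by (auto simp: configs_def restr_def)

lemma configs_empty: "configs d {} = {(\<lambda>_. 0)}"
  by (auto simp: configs_def)

lemma addc_configs: "a \<in> configs d A \<Longrightarrow> c \<in> configs d B \<Longrightarrow> A \<inter> B = {} \<Longrightarrow> addc a c \<in> configs d (A \<union> B)"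
  by (auto simp: configs_def addc_def)

lemma addc_bij:
  assumes "A \<inter> B = {}"
  shows "bij_betw (\<lambda>(a,c). addc a c) (configs d A \<times> configs d B) (configs d (A \<union> B))"
proof (rule bij_betw_imageI)
  show "inj_on (\<lambda>(a, c). addc a c) (configs d A \<times> configs d B)"
  proof (rule inj_onI, clarsimp)
    fix a c a' c'
    assume h: "a \<in> configs d A" "c \<in> configs d B" "a' \<in> configs d A" "c' \<in> configs d B" "addc a c = addc a' c'"
    have "a i = a' i \<and> c i = c' i" for i
    proof -
      have e: "a i + c i = a' i + c' i" using fun_cong[OF h(5), of i] by (simp add: addc_def)
      show ?thesis
      proof (cases "i \<in> A")
        case True
        then have "i \<notin> B" using assms by auto
        then have "c i = 0" "c' i = 0" using configs_zero[OF h(2)] configs_zero[OF h(4)] by auto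
        then show ?thesis using e by simp
      next
        case False
        then have "a i = 0" "a' i = 0" using configs_zero[OF h(1)] configs_zero[OF h(3)] by auto
        then show ?thesis using e by simp
      qed
    qed
    then show "a = a' \<and> c = c'" by auto
  qed
  show "(\<lambda>(a, c). addc a c) ` (configs d A \<times> configs d B) = configs d (A \<union> B)"
  proof
    show "(\<lambda>(a, c). addc a c) ` (configs d A \<times> configs d B) \<subseteq> configs d (A \<union> B)"
      using addc_configs assms by auto
    show "configs d (A \<union> B) \<subseteq> (\<lambda>(a, c). addc a c) ` (configs d A \<times> configs d B)"
    proof
      fix x assume x: "x \<in> configs d (A \<union> B)"
      have "x = addc (restr A x) (restr B x)"
        using x assms by (auto simp: addc_def restr_def configs_def fun_eq_iff)
      moreover have "restr A x \<in> configs d A" "restr B x \<in> configs d B"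
        using x restr_configs by auto
      ultimately show "x \<in> (\<lambda>(a, c). addc a c) ` (configs d A \<times> configs d B)"
        by (intro image_eqI[where x="(restr A x, restr B x)"]) auto
    qed
  qed
qed

lemma split_sum:
  assumes "A \<inter> B = {}"
  shows "sum g (configs d (A \<union> B)) = (\<Sum>a\<in>configs d A. \<Sum>c\<in>configs d B. g (addc a c))"
proof -
  have "sum g (configs d (A \<union> B)) = sum (g \<circ> (\<lambda>(a,c). addc a c)) (configs d A \<times> configs d B)"
    using sum.reindex_bij_betw[OF addc_bij[OF assms], of g] by simp
  also have "\<dots> = (\<Sum>a\<in>configs d A. \<Sum>c\<in>configs d B. g (addc a c))"
    by (simp add: sum.cartesian_product split_def comp_def)
  finally show ?thesis .
qed


lemma sum_prod_configs:
  assumes "finite I" "\<And>i j. i \<in> I \<Longrightarrow> j \<in> I \<Longrightarrow> i \<noteq> j \<Longrightarrow> B i \<inter> B j = {}"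
  shows "(\<Sum>c\<in>configs d (\<Union>i\<in>I. B i). \<Prod>i\<in>I. f i (restr (B i) c))
       = (\<Prod>i\<in>I. \<Sum>c\<in>configs d (B i). (f i c :: complex))"
  using assms
proof (induction I rule: finite_induct)
  case empty
  then show ?case by (simp add: configs_empty)
next
  case (insert k I)
  have disj: "B k \<inter> (\<Union>i\<in>I. B i) = {}" using insert by blast
  have IH: "(\<Sum>c\<in>configs d (\<Union>i\<in>I. B i). \<Prod>i\<in>I. f i (restr (B i) c))
       = (\<Prod>i\<in>I. \<Sum>c\<in>configs d (B i). f i c)"
    using insert by (intro insert.IH) auto
  have r1: "restr (B k) (addc a c) = a" if "a \<in> configs d (B k)" "c \<in> configs d (\<Union>i\<in>I. B i)" for a c
    using that disj by (auto simp: restr_def addc_def configs_def fun_eq_iff) blast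
  have r2: "restr (B i) (addc a c) = restr (B i) c" if "a \<in> configs d (B k)" "i \<in> I" for a c i
  proof -
    have "i \<noteq> k" using insert.hyps(2) that by auto
    then have "B i \<inter> B k = {}" using insert.prems that by simp
    then show ?thesis using that by (auto simp: restr_def addc_def configs_def fun_eq_iff)
  qed
  have "(\<Sum>c\<in>configs d (\<Union>i\<in>insert k I. B i). \<Prod>i\<in>insert k I. f i (restr (B i) c))
     = (\<Sum>a\<in>configs d (B k). \<Sum>c\<in>configs d (\<Union>i\<in>I. B i).
          f k (restr (B k) (addc a c)) * (\<Prod>i\<in>I. f i (restr (B i) (addc a c))))"
    using split_sum[OF disj] insert by simp
  also have "\<dots> = (\<Sum>a\<in>configs d (B k). \<Sum>c\<in>configs d (\<Union>i\<in>I. B i).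
          f k a * (\<Prod>i\<in>I. f i (restr (B i) c)))"
    by (intro sum.cong refl) (simp add: r1 r2)
  also have "\<dots> = (\<Sum>a\<in>configs d (B k). f k a) * (\<Prod>i\<in>I. \<Sum>c\<in>configs d (B i). f i c)"
    by (simp add: sum_distrib_left[symmetric] IH sum_distrib_right)
  also have "\<dots> = (\<Prod>i\<in>insert k I. \<Sum>c\<in>configs d (B i). f i c)"
    using insert by simp
  finally show ?case .
qed

lemma ptrace_tensor:
  assumes "finite \<eta>" "disjoint \<eta>" "\<Union>\<eta> = L" "Y \<subseteq> L" "a \<in> configs d Y" "b \<in> configs d Y"
  shows "ptrace d L Y (tensor d L \<eta> \<sigma>s) a b
       = (\<Prod>Z\<in>\<eta>. ptrace d Z (Z \<inter> Y) (\<sigma>s Z) (restr Z a) (restr Z b))"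
proof -
  have disjY: "Y \<inter> (L - Y) = {}" by auto
  have UL: "(\<Union>Z\<in>\<eta>. Z - Y) = L - Y" using assms(3) by auto
  have dj: "(Z - Y) \<inter> (Z' - Y) = {}" if "Z \<in> \<eta>" "Z' \<in> \<eta>" "Z \<noteq> Z'" for Z Z'
    using assms(2) that unfolding pairwise_def disjnt_def by blast
  have rz: "restr Z (addc a c) = addc (restr Z a) (restr (Z - Y) c)" if "c \<in> configs d (L - Y)" for a c Z
    using that by (auto simp: restr_def addc_def configs_def fun_eq_iff)
  have "ptrace d L Y (tensor d L \<eta> \<sigma>s) a b
      = (\<Sum>c\<in>configs d (L - Y). \<Prod>Z\<in>\<eta>. \<sigma>s Z (restr Z (addc a c)) (restr Z (addc b c)))"
  proof -
    have "addc a c \<in> configs d L" "addc b c \<in> configs d L" if "c \<in> configs d (L - Y)" for c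
      using addc_configs[OF assms(5) that disjY] addc_configs[OF assms(6) that disjY] assms(4)
      by (simp_all add: Un_absorb1 Un_Diff_cancel)
    then show ?thesis using assms(5,6) unfolding ptrace_def tensor_def by (simp cong: sum.cong)
  qed
  also have "\<dots> = (\<Sum>c\<in>configs d (\<Union>Z\<in>\<eta>. Z - Y). \<Prod>Z\<in>\<eta>.
        \<sigma>s Z (addc (restr Z a) (restr (Z - Y) c)) (addc (restr Z b) (restr (Z - Y) c)))"
    unfolding UL by (intro sum.cong refl prod.cong) (simp add: rz)
  also have "\<dots> = (\<Prod>Z\<in>\<eta>. \<Sum>c\<in>configs d (Z - Y). \<sigma>s Z (addc (restr Z a) c) (addc (restr Z b) c))"
    by (rule sum_prod_configs[where f="\<lambda>Z c. \<sigma>s Z (addc (restr Z a) c) (addc (restr Z b) c)"])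
       (use assms(1) dj in auto)
  also have "\<dots> = (\<Prod>Z\<in>\<eta>. ptrace d Z (Z \<inter> Y) (\<sigma>s Z) (restr Z a) (restr Z b))"
  proof (intro prod.cong refl)
    fix Z assume "Z \<in> \<eta>"
    have "restr Z a \<in> configs d (Z \<inter> Y)" "restr Z b \<in> configs d (Z \<inter> Y)"
      using assms(5,6) by (auto simp: restr_def configs_def)
    moreover have "Z - Z \<inter> Y = Z - Y" by auto
    ultimately show "(\<Sum>c\<in>configs d (Z - Y). \<sigma>s Z (addc (restr Z a) c) (addc (restr Z b) c))
        = ptrace d Z (Z \<inter> Y) (\<sigma>s Z) (restr Z a) (restr Z b)"
      unfolding ptrace_def by simp
  qed
  finally show ?thesis .
qed


definition qform :: "(nat \<Rightarrow> nat) \<Rightarrow> nat set \<Rightarrow> operator \<Rightarrow> (config \<Rightarrow> complex) \<Rightarrow> complex" where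
  "qform d X \<rho> v = (\<Sum>a\<in>configs d X. \<Sum>b\<in>configs d X. cnj (v a) * \<rho> a b * v b)"

lemma density_iff: "density d X \<rho> \<longleftrightarrow>
     (\<forall>a b. (a \<notin> configs d X \<or> b \<notin> configs d X) \<longrightarrow> \<rho> a b = 0) \<and>
     (\<forall>v. Im (qform d X \<rho> v) = 0 \<and> Re (qform d X \<rho> v) \<ge> 0) \<and>
     (\<Sum>a\<in>configs d X. \<rho> a a) = 1"
  unfolding density_def qform_def Let_def by simp

lemma addc_zero1[simp]: "addc (\<lambda>_. 0) c = c" and addc_zero2[simp]: "addc a (\<lambda>_. 0) = a"
  by (simp_all add: addc_def)

lemma ptrace_full: "a \<in> configs d X \<Longrightarrow> b \<in> configs d X \<Longrightarrow> ptrace d X X \<sigma> a b = \<sigma> a b"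
  by (simp add: ptrace_def configs_empty)

lemma ptrace_empty: "ptrace d Z {} \<sigma> (\<lambda>_. 0) (\<lambda>_. 0) = (\<Sum>c\<in>configs d Z. \<sigma> c c)"
  by (simp add: ptrace_def configs_empty)

lemma finite_configs:
  assumes "finite X" shows "finite (configs d X)"
proof -
  have "configs d X \<subseteq> (\<lambda>f i. if i \<in> X then f i else 0) ` (PiE X (\<lambda>i. {..<d i}))"
  proof
    fix a assume a: "a \<in> configs d X"
    have "restrict a X \<in> PiE X (\<lambda>i. {..<d i})" using a by (auto simp: configs_def)
    moreover have "a = (\<lambda>i. if i \<in> X then restrict a X i else 0)"
      using a by (auto simp: configs_def fun_eq_iff)
    ultimately show "a \<in> (\<lambda>f i. if i \<in> X then f i else 0) ` (PiE X (\<lambda>i. {..<d i}))" by blast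
  qed
  moreover have "finite (PiE X (\<lambda>i. {..<d i}))" using assms by (simp add: finite_PiE)
  ultimately show ?thesis using finite_subset by blast
qed

lemma sum_fiber:
  assumes "Y \<inter> M = {}" "c \<in> configs d M" "finite M"
  shows "(\<Sum>x\<in>configs d (Y \<union> M). if restr M x = c then h x else 0)
       = (\<Sum>a\<in>configs d Y. (h (addc a c) :: complex))"
proof -
  have rm: "restr M (addc a c1) = c1" if "a \<in> configs d Y" "c1 \<in> configs d M" for a c1
    using that assms(1) by (auto simp: restr_def addc_def configs_def fun_eq_iff)
  have "(\<Sum>x\<in>configs d (Y \<union> M). if restr M x = c then h x else 0)
      = (\<Sum>a\<in>configs d Y. \<Sum>c1\<in>configs d M. if restr M (addc a c1) = c then h (addc a c1) else 0)"
    by (rule split_sum[OF assms(1)])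
  also have "\<dots> = (\<Sum>a\<in>configs d Y. \<Sum>c1\<in>configs d M. if c1 = c then h (addc a c1) else 0)"
    by (intro sum.cong refl) (simp add: rm)
  also have "\<dots> = (\<Sum>a\<in>configs d Y. h (addc a c))"
    using assms(2) finite_configs[OF assms(3)] by (simp add: sum.delta)
  finally show ?thesis .
qed

lemma ptrace_density:
  assumes "density d L \<rho>" "Y \<subseteq> L" "finite L"
  shows "density d Y (ptrace d L Y \<rho>)"
proof -
  define M where "M = L - Y"
  have fM: "finite M" using assms(3) by (simp add: M_def)
  have YM: "Y \<inter> M = {}" and LYM: "L = Y \<union> M" using assms(2) by (auto simp: M_def)
  have ry: "restr Y (addc a c) = a" if "a \<in> configs d Y" "c \<in> configs d M" for a c
    using that YM by (auto simp: restr_def addc_def configs_def fun_eq_iff)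
  have dens: "\<forall>v. Im (qform d L \<rho> v) = 0 \<and> Re (qform d L \<rho> v) \<ge> 0"
    and tr: "(\<Sum>a\<in>configs d L. \<rho> a a) = 1"
    using assms(1) unfolding density_iff by auto
  have Qc: "(\<Sum>a\<in>configs d Y. \<Sum>b\<in>configs d Y. cnj (v a) * \<rho> (addc a c) (addc b c) * v b)
      = qform d L \<rho> (\<lambda>x. if restr M x = c then v (restr Y x) else 0)"
    if c: "c \<in> configs d M" for v c
  proof -
    have "qform d L \<rho> (\<lambda>x. if restr M x = c then v (restr Y x) else 0)
        = (\<Sum>x\<in>configs d (Y \<union> M). if restr M x = c then
             (\<Sum>y\<in>configs d (Y \<union> M). if restr M y = c then
                 cnj (v (restr Y x)) * \<rho> x y * v (restr Y y) else 0) else 0)"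
      unfolding qform_def LYM by (auto intro!: sum.cong)
    also have "\<dots> = (\<Sum>a\<in>configs d Y. \<Sum>b\<in>configs d Y.
                 cnj (v (restr Y (addc a c))) * \<rho> (addc a c) (addc b c) * v (restr Y (addc b c)))"
      by (simp add: sum_fiber[OF YM c fM])
    also have "\<dots> = (\<Sum>a\<in>configs d Y. \<Sum>b\<in>configs d Y. cnj (v a) * \<rho> (addc a c) (addc b c) * v b)"
      by (intro sum.cong refl) (simp add: ry c)
    finally show ?thesis by simp
  qed
  have q: "qform d Y (ptrace d L Y \<rho>) v
      = (\<Sum>c\<in>configs d M. qform d L \<rho> (\<lambda>x. if restr M x = c then v (restr Y x) else 0))" for v
  proof -
    have "qform d Y (ptrace d L Y \<rho>) v
        = (\<Sum>a\<in>configs d Y. \<Sum>b\<in>configs d Y. \<Sum>c\<in>configs d M.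
             cnj (v a) * \<rho> (addc a c) (addc b c) * v b)"
      unfolding qform_def ptrace_def M_def[symmetric]
      by (intro sum.cong refl) (simp add: sum_distrib_left sum_distrib_right)
    also have "\<dots> = (\<Sum>c\<in>configs d M. \<Sum>a\<in>configs d Y. \<Sum>b\<in>configs d Y.
             cnj (v a) * \<rho> (addc a c) (addc b c) * v b)"
      by (simp add: sum.swap[where B="configs d M"])
    also have "\<dots> = (\<Sum>c\<in>configs d M. qform d L \<rho> (\<lambda>x. if restr M x = c then v (restr Y x) else 0))"
      by (intro sum.cong refl) (simp add: Qc)
    finally show ?thesis .
  qed
  show ?thesis
    unfolding density_iff
  proof (intro conjI allI impI)
    fix a b assume "a \<notin> configs d Y \<or> b \<notin> configs d Y"
    then show "ptrace d L Y \<rho> a b = 0" by (auto simp: ptrace_def)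
  next
    fix v
    show "Im (qform d Y (ptrace d L Y \<rho>) v) = 0" unfolding q Im_sum using dens by simp
    show "0 \<le> Re (qform d Y (ptrace d L Y \<rho>) v)" unfolding q Re_sum using dens by (simp add: sum_nonneg)
  next
    have "(\<Sum>a\<in>configs d Y. ptrace d L Y \<rho> a a) = (\<Sum>a\<in>configs d Y. \<Sum>c\<in>configs d M. \<rho> (addc a c) (addc a c))"
      by (simp add: ptrace_def M_def)
    also have "\<dots> = (\<Sum>x\<in>configs d L. \<rho> x x)"
      unfolding LYM by (rule split_sum[OF YM, symmetric])
    finally show "(\<Sum>a\<in>configs d Y. ptrace d L Y \<rho> a a) = 1" using tr by simp
  qed
qed


lemma partition_finite: "partition_on L \<eta> \<Longrightarrow> finite L \<Longrightarrow> finite \<eta>"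
  by (metis finite_UnionD partition_onD1)

lemma partition_disj: "partition_on L \<eta> \<Longrightarrow> Z \<in> \<eta> \<Longrightarrow> Z' \<in> \<eta> \<Longrightarrow> Z \<noteq> Z' \<Longrightarrow> Z \<inter> Z' = {}"
  by (metis disjnt_def pairwiseD partition_onD2)

lemma partition_sub: "partition_on L \<eta> \<Longrightarrow> Z \<in> \<eta> \<Longrightarrow> Z \<subseteq> L"
  by (metis Union_upper partition_onD1)

lemma partition_ne: "partition_on L \<eta> \<Longrightarrow> Z \<in> \<eta> \<Longrightarrow> Z \<noteq> {}"
  by (metis partition_onD3)

lemma tensor_regroup:
  assumes P: "partition_on L \<eta>" and Q: "partition_on L \<xi>" and fL: "finite L"
    and R: "\<forall>Z\<in>\<eta>. \<exists>X\<in>\<xi>. Z \<subseteq> X"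
  shows "tensor d L \<eta> \<sigma>s = tensor d L \<xi> (\<lambda>X. tensor d X {Z\<in>\<eta>. Z \<subseteq> X} \<sigma>s)"
proof (intro ext)
  fix a b
  show "tensor d L \<eta> \<sigma>s a b = tensor d L \<xi> (\<lambda>X. tensor d X {Z\<in>\<eta>. Z \<subseteq> X} \<sigma>s) a b"
  proof (cases "a \<in> configs d L \<and> b \<in> configs d L")
    case False then show ?thesis by (auto simp: tensor_def)
  next
    case True
    have fe: "finite \<eta>" "finite \<xi>" using P Q fL partition_finite by auto
    have U: "(\<Union>X\<in>\<xi>. {Z\<in>\<eta>. Z \<subseteq> X}) = \<eta>" using R by auto
    have dj: "\<forall>X\<in>\<xi>. \<forall>X'\<in>\<xi>. X \<noteq> X' \<longrightarrow> {Z\<in>\<eta>. Z \<subseteq> X} \<inter> {Z\<in>\<eta>. Z \<subseteq> X'} = {}"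
    proof (intro ballI impI)
      fix X X' assume "X \<in> \<xi>" "X' \<in> \<xi>" "X \<noteq> X'"
      then have "X \<inter> X' = {}" using partition_disj[OF Q] by auto
      then show "{Z\<in>\<eta>. Z \<subseteq> X} \<inter> {Z\<in>\<eta>. Z \<subseteq> X'} = {}" using partition_ne[OF P] by blast
    qed
    have "tensor d L \<eta> \<sigma>s a b = (\<Prod>Z\<in>\<eta>. \<sigma>s Z (restr Z a) (restr Z b))"
      using True by (simp add: tensor_def)
    also have "\<dots> = (\<Prod>X\<in>\<xi>. \<Prod>Z\<in>{Z\<in>\<eta>. Z \<subseteq> X}. \<sigma>s Z (restr Z a) (restr Z b))"
      by (subst U[symmetric], rule prod.UNION_disjoint) (use fe dj in auto)
    also have "\<dots> = (\<Prod>X\<in>\<xi>. tensor d X {Z\<in>\<eta>. Z \<subseteq> X} \<sigma>s (restr X a) (restr X b))"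
    proof (intro prod.cong refl)
      fix X assume X: "X \<in> \<xi>"
      have XL: "X \<subseteq> L" using partition_sub[OF Q X] .
      have "restr Z (restr X a) = restr Z a" "restr Z (restr X b) = restr Z b" if "Z \<subseteq> X" for Z
        using that by (simp_all add: restr_restr Int_absorb2)
      then show "(\<Prod>Z\<in>{Z\<in>\<eta>. Z \<subseteq> X}. \<sigma>s Z (restr Z a) (restr Z b))
          = tensor d X {Z\<in>\<eta>. Z \<subseteq> X} \<sigma>s (restr X a) (restr X b)"
        using True XL restr_configs[of a d L X] restr_configs[of b d L X] by (simp add: tensor_def)
    qed
    also have "\<dots> = tensor d L \<xi> (\<lambda>X. tensor d X {Z\<in>\<eta>. Z \<subseteq> X} \<sigma>s) a b"
      using True by (simp add: tensor_def)
    finally show ?thesis .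
  qed
qed

lemma D_unc_refine:
  assumes P: "partition_on L \<eta>" and Q: "partition_on L \<xi>" and fL: "finite L"
    and R: "\<forall>Z\<in>\<eta>. \<exists>X\<in>\<xi>. Z \<subseteq> X"
  shows "D_unc d L \<eta> \<subseteq> D_unc d L \<xi>"
proof
  fix \<rho> assume "\<rho> \<in> D_unc d L \<eta>"
  then obtain \<sigma>s where rD: "\<rho> \<in> D d L" and sD: "\<forall>Z\<in>\<eta>. \<sigma>s Z \<in> D d Z"
    and rt: "\<rho> = tensor d L \<eta> \<sigma>s" unfolding D_unc_def by auto
  define \<rho>s where "\<rho>s X = ptrace d L X \<rho>" for X
  have fe: "finite \<eta>" using P fL partition_finite by auto
  have "\<rho>s X \<in> D d X" if "X \<in> \<xi>" for X
    using ptrace_density[of d L \<rho> X] rD partition_sub[OF Q that] fL by (simp add: D_def \<rho>s_def)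
  moreover have "\<rho> = tensor d L \<xi> \<rho>s"
  proof -
    have eq: "tensor d X {Z\<in>\<eta>. Z \<subseteq> X} \<sigma>s c e = \<rho>s X c e"
      if X: "X \<in> \<xi>" and c: "c \<in> configs d X" and e: "e \<in> configs d X" for X c e
    proof -
      have XL: "X \<subseteq> L" using partition_sub[OF Q X] .
      have "\<rho>s X c e = (\<Prod>Z\<in>\<eta>. ptrace d Z (Z \<inter> X) (\<sigma>s Z) (restr Z c) (restr Z e))"
        unfolding \<rho>s_def rt
        by (rule ptrace_tensor[OF fe partition_onD2[OF P] partition_onD1[OF P, symmetric] XL c e])
      also have "\<dots> = (\<Prod>Z\<in>{Z\<in>\<eta>. Z \<subseteq> X}. \<sigma>s Z (restr Z c) (restr Z e))"
      proof (rule prod.mono_neutral_cong_right[OF fe])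
        show "{Z\<in>\<eta>. Z \<subseteq> X} \<subseteq> \<eta>" by auto
        show "\<forall>Z\<in>\<eta> - {Z\<in>\<eta>. Z \<subseteq> X}. ptrace d Z (Z \<inter> X) (\<sigma>s Z) (restr Z c) (restr Z e) = 1"
        proof
          fix Z assume Z: "Z \<in> \<eta> - {Z\<in>\<eta>. Z \<subseteq> X}"
          then obtain X' where X': "X' \<in> \<xi>" "Z \<subseteq> X'" using R by auto
          then have "X' \<noteq> X" using Z by auto
          then have ZX: "Z \<inter> X = {}" using partition_disj[OF Q X'(1) X] X' by auto
          have "restr Z c = (\<lambda>_. 0)" "restr Z e = (\<lambda>_. 0)"
            using restr_zero[OF c ZX] restr_zero[OF e ZX] by auto
          moreover have "(\<Sum>a\<in>configs d Z. \<sigma>s Z a a) = 1"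
            using sD Z unfolding D_def density_iff by auto
          ultimately show "ptrace d Z (Z \<inter> X) (\<sigma>s Z) (restr Z c) (restr Z e) = 1"
            using ZX ptrace_empty by simp
        qed
        show "ptrace d Z (Z \<inter> X) (\<sigma>s Z) (restr Z c) (restr Z e) = \<sigma>s Z (restr Z c) (restr Z e)"
          if "Z \<in> {Z\<in>\<eta>. Z \<subseteq> X}" for Z
        proof -
          have "Z \<inter> X = Z" "Z \<subseteq> L" using that XL by auto
          moreover have "restr Z c \<in> configs d Z" "restr Z e \<in> configs d Z"
            using c e that by (auto simp: restr_def configs_def)
          ultimately show ?thesis by (simp add: ptrace_full)
        qed
      qed
      also have "\<dots> = tensor d X {Z\<in>\<eta>. Z \<subseteq> X} \<sigma>s c e"
        using c e by (simp add: tensor_def)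
      finally show ?thesis by simp
    qed
    have "\<rho> = tensor d L \<xi> (\<lambda>X. tensor d X {Z\<in>\<eta>. Z \<subseteq> X} \<sigma>s)"
      using rt tensor_regroup[OF P Q fL R] by simp
    also have "\<dots> = tensor d L \<xi> \<rho>s"
    proof -
      have "\<And>X a b. X \<in> \<xi> \<Longrightarrow> a \<in> configs d L \<Longrightarrow> b \<in> configs d L \<Longrightarrow>
          tensor d X {Z\<in>\<eta>. Z \<subseteq> X} \<sigma>s (restr X a) (restr X b) = \<rho>s X (restr X a) (restr X b)"
        using eq restr_configs partition_sub[OF Q] by blast
      then show ?thesis unfolding tensor_def[of d L \<xi>] by (intro ext) (auto intro!: prod.cong)
    qed
    finally show ?thesis .
  qed
  ultimately show "\<rho> \<in> D_unc d L \<xi>" using rD unfolding D_unc_def by auto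
qed


lemma ptrace_block:
  assumes P: "partition_on L \<eta>" and fL: "finite L" and sD: "\<forall>Z\<in>\<eta>. \<sigma>s Z \<in> D d Z"
    and YL: "Y \<subseteq> L" and a: "a \<in> configs d Y" and b: "b \<in> configs d Y"
  shows "ptrace d L Y (tensor d L \<eta> \<sigma>s) a b
       = (\<Prod>Z\<in>{Z\<in>\<eta>. Z \<inter> Y \<noteq> {}}. ptrace d Z (Z \<inter> Y) (\<sigma>s Z) (restr Z a) (restr Z b))"
proof -
  have fe: "finite \<eta>" using P fL partition_finite by auto
  have "ptrace d L Y (tensor d L \<eta> \<sigma>s) a b
       = (\<Prod>Z\<in>\<eta>. ptrace d Z (Z \<inter> Y) (\<sigma>s Z) (restr Z a) (restr Z b))"
    by (rule ptrace_tensor[OF fe partition_onD2[OF P] partition_onD1[OF P, symmetric] YL a b])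
  also have "\<dots> = (\<Prod>Z\<in>{Z\<in>\<eta>. Z \<inter> Y \<noteq> {}}. ptrace d Z (Z \<inter> Y) (\<sigma>s Z) (restr Z a) (restr Z b))"
  proof (rule prod.mono_neutral_cong_right[OF fe])
    show "{Z\<in>\<eta>. Z \<inter> Y \<noteq> {}} \<subseteq> \<eta>" by auto
    show "\<forall>Z\<in>\<eta> - {Z\<in>\<eta>. Z \<inter> Y \<noteq> {}}. ptrace d Z (Z \<inter> Y) (\<sigma>s Z) (restr Z a) (restr Z b) = 1"
    proof
      fix Z assume Z: "Z \<in> \<eta> - {Z\<in>\<eta>. Z \<inter> Y \<noteq> {}}"
      then have ZY: "Z \<inter> Y = {}" by auto
      have "restr Z a = (\<lambda>_. 0)" "restr Z b = (\<lambda>_. 0)"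
        using restr_zero[OF a ZY] restr_zero[OF b ZY] by auto
      moreover have "(\<Sum>c\<in>configs d Z. \<sigma>s Z c c) = 1"
        using sD Z unfolding D_def density_iff by auto
      ultimately show "ptrace d Z (Z \<inter> Y) (\<sigma>s Z) (restr Z a) (restr Z b) = 1"
        using ZY ptrace_empty by simp
    qed
  qed simp
  finally show ?thesis .
qed

lemma pmeet_partition:
  assumes Q: "partition_on L \<xi>" and Q': "partition_on L \<xi>'"
  shows "partition_on L (pmeet \<xi> \<xi>')"
  unfolding partition_on_def
proof (intro conjI)
  show "\<Union> (pmeet \<xi> \<xi>') = L"
  proof
    show "\<Union> (pmeet \<xi> \<xi>') \<subseteq> L" using partition_sub[OF Q] by (auto simp: pmeet_def)
    show "L \<subseteq> \<Union> (pmeet \<xi> \<xi>')"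
    proof
      fix x assume "x \<in> L"
      then obtain X X' where "X \<in> \<xi>" "X' \<in> \<xi>'" "x \<in> X" "x \<in> X'"
        using partition_onD1[OF Q] partition_onD1[OF Q'] by blast
      then show "x \<in> \<Union> (pmeet \<xi> \<xi>')" unfolding pmeet_def by blast
    qed
  qed
  show "disjoint (pmeet \<xi> \<xi>')"
    unfolding pairwise_def disjnt_def pmeet_def
    using partition_disj[OF Q] partition_disj[OF Q'] by blast
  show "{} \<notin> pmeet \<xi> \<xi>'" unfolding pmeet_def by auto
qed

lemma pmeet_block:
  assumes Q: "partition_on L \<xi>" and Q': "partition_on L \<xi>'" and X: "X \<in> \<xi>"
  shows "{Z\<in>pmeet \<xi> \<xi>'. Z \<subseteq> X} = (\<lambda>X'. X \<inter> X') ` {X'\<in>\<xi>'. X' \<inter> X \<noteq> {}}"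
proof
  show "{Z\<in>pmeet \<xi> \<xi>'. Z \<subseteq> X} \<subseteq> (\<lambda>X'. X \<inter> X') ` {X'\<in>\<xi>'. X' \<inter> X \<noteq> {}}"
  proof
    fix Z assume "Z \<in> {Z\<in>pmeet \<xi> \<xi>'. Z \<subseteq> X}"
    then obtain Y Y' where Z: "Z = Y \<inter> Y'" "Y \<in> \<xi>" "Y' \<in> \<xi>'" "Y \<inter> Y' \<noteq> {}" "Z \<subseteq> X"
      unfolding pmeet_def by auto
    then have "Y = X" using partition_disj[OF Q Z(2) X] by blast
    then show "Z \<in> (\<lambda>X'. X \<inter> X') ` {X'\<in>\<xi>'. X' \<inter> X \<noteq> {}}" using Z by blast
  qed
  show "(\<lambda>X'. X \<inter> X') ` {X'\<in>\<xi>'. X' \<inter> X \<noteq> {}} \<subseteq> {Z\<in>pmeet \<xi> \<xi>'. Z \<subseteq> X}"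
    using X unfolding pmeet_def by blast
qed

lemma pmeet_inj:
  assumes Q': "partition_on L \<xi>'"
  shows "inj_on (\<lambda>X'. X \<inter> X') {X'\<in>\<xi>'. X' \<inter> X \<noteq> {}}"
proof (rule inj_onI)
  fix X1 X2 assume "X1 \<in> {X'\<in>\<xi>'. X' \<inter> X \<noteq> {}}" "X2 \<in> {X'\<in>\<xi>'. X' \<inter> X \<noteq> {}}" "X \<inter> X1 = X \<inter> X2"
  then show "X1 = X2" using partition_disj[OF Q'] by blast
qed


lemma single_block:
  assumes "partition_on L \<eta>" "W0 \<in> \<eta>" "Y \<subseteq> W0" "Y \<noteq> {}"
  shows "{W\<in>\<eta>. W \<inter> Y \<noteq> {}} = {W0}"
  using assms partition_disj[OF assms(1)] by blast

lemma D_unc_meet_sub: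
  assumes Q: "partition_on L \<xi>" and Q': "partition_on L \<xi>'" and fL: "finite L"
  shows "D_unc d L \<xi> \<inter> D_unc d L \<xi>' \<subseteq> D_unc d L (pmeet \<xi> \<xi>')"
proof
  fix \<rho> assume "\<rho> \<in> D_unc d L \<xi> \<inter> D_unc d L \<xi>'"
  then have r1: "\<rho> \<in> D_unc d L \<xi>" and r2: "\<rho> \<in> D_unc d L \<xi>'" by auto
  from r1 obtain \<rho>s where rD: "\<rho> \<in> D d L" and sD: "\<forall>X\<in>\<xi>. \<rho>s X \<in> D d X"
    and rt: "\<rho> = tensor d L \<xi> \<rho>s" unfolding D_unc_def by blast
  from r2 obtain \<rho>s' where sD': "\<forall>X\<in>\<xi>'. \<rho>s' X \<in> D d X"
    and rt': "\<rho> = tensor d L \<xi>' \<rho>s'" unfolding D_unc_def by blast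
  define M where "M = pmeet \<xi> \<xi>'"
  have PM: "partition_on L M" using pmeet_partition[OF Q Q'] by (simp add: M_def)
  define \<sigma> where "\<sigma> Z = ptrace d L Z \<rho>" for Z
  have \<sigma>D: "\<sigma> Z \<in> D d Z" if "Z \<in> M" for Z
    using ptrace_density[of d L \<rho> Z] rD partition_sub[OF PM that] fL by (simp add: D_def \<sigma>_def)
  have R: "\<forall>Z\<in>M. \<exists>X\<in>\<xi>. Z \<subseteq> X" unfolding M_def pmeet_def by auto
  have key: "\<rho>s X c e = tensor d X {Z\<in>M. Z \<subseteq> X} \<sigma> c e"
    if X: "X \<in> \<xi>" and c: "c \<in> configs d X" and e: "e \<in> configs d X" for X c e
  proof -
    have XL: "X \<subseteq> L" using partition_sub[OF Q X] .
    define S where "S = {X'\<in>\<xi>'. X' \<inter> X \<noteq> {}}"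
    have "ptrace d L X \<rho> c e = (\<Prod>W\<in>{W\<in>\<xi>. W \<inter> X \<noteq> {}}. ptrace d W (W \<inter> X) (\<rho>s W) (restr W c) (restr W e))"
      unfolding rt by (rule ptrace_block[OF Q fL sD XL c e])
    also have "\<dots> = ptrace d X X (\<rho>s X) (restr X c) (restr X e)"
      using single_block[OF Q X order_refl partition_ne[OF Q X]] by simp
    also have "\<dots> = \<rho>s X c e" using c e by (simp add: restr_id ptrace_full)
    finally have a: "\<rho>s X c e = ptrace d L X \<rho> c e" by simp
    have b: "ptrace d L X \<rho> c e = (\<Prod>X'\<in>S. ptrace d X' (X' \<inter> X) (\<rho>s' X') (restr X' c) (restr X' e))"
      unfolding rt' S_def by (rule ptrace_block[OF Q' fL sD' XL c e])
    have "tensor d X {Z\<in>M. Z \<subseteq> X} \<sigma> c e = (\<Prod>Z\<in>{Z\<in>M. Z \<subseteq> X}. \<sigma> Z (restr Z c) (restr Z e))"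
      using c e by (simp add: tensor_def)
    also have "\<dots> = (\<Prod>X'\<in>S. \<sigma> (X \<inter> X') (restr (X \<inter> X') c) (restr (X \<inter> X') e))"
      unfolding M_def pmeet_block[OF Q Q' X] S_def
      by (subst prod.reindex[OF pmeet_inj[OF Q']]) simp
    also have "\<dots> = (\<Prod>X'\<in>S. ptrace d X' (X' \<inter> X) (\<rho>s' X') (restr X' c) (restr X' e))"
    proof (intro prod.cong refl)
      fix X' assume "X' \<in> S"
      then have X': "X' \<in> \<xi>'" "X' \<inter> X \<noteq> {}" by (auto simp: S_def)
      define Z where "Z = X \<inter> X'"
      have ZL: "Z \<subseteq> L" using XL by (auto simp: Z_def)
      have c0: "restr Z c \<in> configs d Z" "restr Z e \<in> configs d Z"
        using c e by (auto simp: restr_def configs_def Z_def)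
      have "\<sigma> Z (restr Z c) (restr Z e)
          = (\<Prod>W\<in>{W\<in>\<xi>'. W \<inter> Z \<noteq> {}}. ptrace d W (W \<inter> Z) (\<rho>s' W) (restr W (restr Z c)) (restr W (restr Z e)))"
        unfolding \<sigma>_def rt' by (rule ptrace_block[OF Q' fL sD' ZL c0])
      also have "\<dots> = ptrace d X' (X' \<inter> Z) (\<rho>s' X') (restr X' (restr Z c)) (restr X' (restr Z e))"
        using single_block[OF Q' X'(1), of Z] X'(2) by (auto simp: Z_def Int_commute)
      also have "\<dots> = ptrace d X' (X' \<inter> X) (\<rho>s' X') (restr X' c) (restr X' e)"
      proof -
        have "X' \<inter> Z = X' \<inter> X" by (auto simp: Z_def)
        moreover have "restr X' (restr Z c) = restr X' c" "restr X' (restr Z e) = restr X' e"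
          using restr_sub[OF c, of X'] restr_sub[OF e, of X'] by (auto simp: restr_restr Z_def Int_ac)
        ultimately show ?thesis by simp
      qed
      finally show "\<sigma> (X \<inter> X') (restr (X \<inter> X') c) (restr (X \<inter> X') e)
          = ptrace d X' (X' \<inter> X) (\<rho>s' X') (restr X' c) (restr X' e)" by (simp add: Z_def)
    qed
    finally show ?thesis using a b by simp
  qed
  have "\<rho> = tensor d L \<xi> (\<lambda>X. tensor d X {Z\<in>M. Z \<subseteq> X} \<sigma>)"
  proof -
    have "\<And>X a b. X \<in> \<xi> \<Longrightarrow> a \<in> configs d L \<Longrightarrow> b \<in> configs d L \<Longrightarrow>
        \<rho>s X (restr X a) (restr X b) = tensor d X {Z\<in>M. Z \<subseteq> X} \<sigma> (restr X a) (restr X b)"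
      using key restr_configs partition_sub[OF Q] by blast
    then show ?thesis unfolding rt tensor_def[of d L \<xi>] by (intro ext) (auto intro!: prod.cong)
  qed
  also have "\<dots> = tensor d L M \<sigma>"
    using tensor_regroup[OF PM Q fL R] by simp
  finally have "\<rho> = tensor d L M \<sigma>" .
  then show "\<rho> \<in> D_unc d L (pmeet \<xi> \<xi>')" using rD \<sigma>D unfolding D_unc_def M_def by auto
qed

theorem mainTheorem18:
  fixes n :: nat and d :: "nat \<Rightarrow> nat" and \<xi> \<xi>' :: "nat set set"
  assumes "n \<ge> 1"
    and "\<And>i. i \<in> {1..n} \<Longrightarrow> 1 < d i"
    and "partition_on {1..n} \<xi>"
    and "partition_on {1..n} \<xi>'"
  shows "D_unc d {1..n} \<xi> \<inter> D_unc d {1..n} \<xi>' = D_unc d {1..n} (pmeet \<xi> \<xi>')"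
proof
  show "D_unc d {1..n} \<xi> \<inter> D_unc d {1..n} \<xi>' \<subseteq> D_unc d {1..n} (pmeet \<xi> \<xi>')"
    by (rule D_unc_meet_sub[OF assms(3,4)]) simp
  have PM: "partition_on {1..n} (pmeet \<xi> \<xi>')" by (rule pmeet_partition[OF assms(3,4)])
  have "D_unc d {1..n} (pmeet \<xi> \<xi>') \<subseteq> D_unc d {1..n} \<xi>"
    by (rule D_unc_refine[OF PM assms(3)]) (auto simp: pmeet_def)
  moreover have "D_unc d {1..n} (pmeet \<xi> \<xi>') \<subseteq> D_unc d {1..n} \<xi>'"
    by (rule D_unc_refine[OF PM assms(4)]) (auto simp: pmeet_def)
  ultimately show "D_unc d {1..n} (pmeet \<xi> \<xi>') \<subseteq> D_unc d {1..n} \<xi> \<inter> D_unc d {1..n} \<xi>'" by blast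
qed

end
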